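(* For every $w\in W^\star$ and every integer $n\ge1$, $$(B^\dagger)^n|0,w\rangle=2^{-n/2}|n,w\rangle\qquad\text{and}\qquad B^\dagger B|n,w\rangle=2^{-1}|n,w\rangle.$$
   Context: $\Omega=\{0,1\}^{\mathbb N}$ with the shift $\sigma$; for $a\in\{0,1\}$, $ax=(a,x_1,\dots)$. $\mu$ is the measure of maximal entropy (uniform Bernoulli product measure), $L^2(\mu)$ the Hilbert space of square-integrable functions. Ruelle operator $L\phi(x)=\frac12(\phi(0x)+\phi(1x))$; Koopman operator $K\phi=\phi\circ\sigma$; $B=2^{-1/2}L$, $B^\dagger=2^{-1/2}K$. $W$ is the set of finite words over $\{0,1\}$ (including the empty word $\varepsilon$), $\ell(v)$ the length of $v$, $uv$ concatenation, $[v]$ the cylinder of sequences starting with $v$, $\chi_{[v]}$ its indicator. For nonempty $v$, $e_v=2^{\ell(v)/2}(\chi_{[v1]}-\chi_{[v0]})$; also $e^0_\varepsilon=-2^{1/2}\chi_{[0]}$, $e^1_\varepsilon=2^{1/2}\chi_{[1]}$. Define $|0\rangle=2^{-1/2}(e^0_\varepsilon+e^1_\varepsilon)$ and $|n\rangle=2^{-n/2}\sum_{\ell(v)=n}e_v$ for $n\ge1$. For $w\in W$ define $|0,w\rangle=2^{-1/2}(e_{0w}-e_{1w})$ and, for $n\ge1$, $|n,w\rangle=2^{-(n+1)/2}\big(\sum_{\ell(u)=n}e_{u0w}-\sum_{\ell(u)=n}e_{u1w}\big)$. Let $W^\star=\{\star\}\cup W$ and set $|n,\star\rangle=|n\rangle$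 for all $n\ge0$. *)

theory Defs
  imports Complex_Main
begin

text \<open>The sequence space Omega = {0,1}^N, with the letter 0 encoded as False and 1 as True.
  Elements of L^2(mu) are represented by real-valued functions on Omega; the operators
  are defined pointwise (identities below are pointwise, hence in particular mu-a.e.).\<close>

type_synonym seq = "nat \<Rightarrow> bool"

definition shift :: "seq \<Rightarrow> seq" where
  "shift x = (\<lambda>i. x (Suc i))"

definition prepend :: "bool \<Rightarrow> seq \<Rightarrow> seq" where
  "prepend a x = (\<lambda>i. case i of 0 \<Rightarrow> a | Suc j \<Rightarrow> x j)"

definition cyl :: "bool list \<Rightarrow> seq set" where
  "cyl v = {x. \<forall>i<length v. x i = v ! i}"

definition chi :: "bool list \<Rightarrow> seq \<Rightarrow> real" where
  "chi v = (\<lambda>x. if x \<in> cyl v then 1 else 0)"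

definition ruelle :: "(seq \<Rightarrow> real) \<Rightarrow> seq \<Rightarrow> real" where
  "ruelle \<phi> x = (\<phi> (prepend False x) + \<phi> (prepend True x)) / 2"

definition koopman :: "(seq \<Rightarrow> real) \<Rightarrow> seq \<Rightarrow> real" where
  "koopman \<phi> = \<phi> \<circ> shift"

definition Bop :: "(seq \<Rightarrow> real) \<Rightarrow> seq \<Rightarrow> real" where
  "Bop \<phi> = (\<lambda>x. ruelle \<phi> x / sqrt 2)"

definition Bdag :: "(seq \<Rightarrow> real) \<Rightarrow> seq \<Rightarrow> real" where
  "Bdag \<phi> = (\<lambda>x. koopman \<phi> x / sqrt 2)"

definition e :: "bool list \<Rightarrow> seq \<Rightarrow> real" where
  "e v = (\<lambda>x. 2 powr (real (length v) / 2) * (chi (v @ [True]) x - chi (v @ [False]) x))"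

definition e0_eps :: "seq \<Rightarrow> real" where
  "e0_eps = (\<lambda>x. - sqrt 2 * chi [False] x)"

definition e1_eps :: "seq \<Rightarrow> real" where
  "e1_eps = (\<lambda>x. sqrt 2 * chi [True] x)"

definition ket_star :: "nat \<Rightarrow> seq \<Rightarrow> real" where
  "ket_star n = (if n = 0 then (\<lambda>x. 2 powr (-1/2) * (e0_eps x + e1_eps x))
     else (\<lambda>x. 2 powr (- real n / 2) * (\<Sum>v\<in>{v::bool list. length v = n}. e v x)))"

definition ket_word :: "nat \<Rightarrow> bool list \<Rightarrow> seq \<Rightarrow> real" where
  "ket_word n w = (if n = 0 then (\<lambda>x. 2 powr (-1/2) * (e (False # w) x - e (True # w) x))
     else (\<lambda>x. 2 powr (- (real n + 1) / 2) *
              ((\<Sum>u\<in>{u::bool list. length u = n}. e (u @ False # w) x)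
             - (\<Sum>u\<in>{u::bool list. length u = n}. e (u @ True # w) x))))"

text \<open>W^star = {star} \<union> W is modelled as bool list option, None being star.\<close>
fun ket :: "nat \<Rightarrow> bool list option \<Rightarrow> seq \<Rightarrow> real" where
  "ket n None = ket_star n"
| "ket n (Some w) = ket_word n w"

end

theory Submission
  imports Defs
begin

lemma chi_cons: "chi (a#v) x = (if x 0 = a then chi v (shift x) else 0)"
  by (auto simp: chi_def cyl_def shift_def less_Suc_eq_0_disj)

lemma chi_shift: "chi v (shift x) = chi (False#v) x + chi (True#v) x"
  by (cases "x 0") (auto simp: chi_cons)

lemma powr_Suc_half: "(2::real) powr (real (Suc n) / 2) = 2 powr (real n / 2) * sqrt 2"
proof -
  have "(2::real) powr (real (Suc n) / 2) = 2 powr (real n / 2 + 1/2)"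
    by (simp add: add_divide_distrib ac_simps)
  also have "\<dots> = 2 powr (real n / 2) * sqrt 2"
    by (simp add: powr_add powr_half_sqrt)
  finally show ?thesis .
qed

lemma e_shift: "e v (shift x) = (e (False#v) x + e (True#v) x) / sqrt 2"
proof -
  have "e (False#v) x + e (True#v) x
      = 2 powr (real (Suc (length v)) / 2) * (chi (v @ [True]) (shift x) - chi (v @ [False]) (shift x))"
    unfolding e_def by (simp add: chi_shift algebra_simps)
  also have "\<dots> = sqrt 2 * e v (shift x)"
    unfolding e_def powr_Suc_half by simp
  finally show ?thesis by simp
qed

lemma sum_len_Suc:
  "(\<Sum>u\<in>{u::bool list. length u = Suc n}. f u) = (\<Sum>u\<in>{u. length u = n}. f (False#u) + f (True#u))"
proof -
  let ?A = "{u::bool list. length u = n}"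
  have eq: "{u::bool list. length u = Suc n} = Cons False ` ?A \<union> Cons True ` ?A"
  proof
    show "{u::bool list. length u = Suc n} \<subseteq> Cons False ` ?A \<union> Cons True ` ?A"
    proof
      fix u :: "bool list" assume "u \<in> {u. length u = Suc n}"
      then obtain a u' where "u = a # u'" "length u' = n" by (cases u) auto
      then show "u \<in> Cons False ` ?A \<union> Cons True ` ?A" by (cases a) auto
    qed
  qed auto
  have "(\<Sum>u\<in>{u::bool list. length u = Suc n}. f u)
      = (\<Sum>u\<in>Cons False ` ?A. f u) + (\<Sum>u\<in>Cons True ` ?A. f u)"
    unfolding eq by (rule sum.union_disjoint) (auto intro!: finite_imageI simp: finite_list_length)
  also have "\<dots> = (\<Sum>u\<in>?A. f (False#u)) + (\<Sum>u\<in>?A. f (True#u))"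
    by (simp add: sum.reindex)
  finally show ?thesis by (simp add: sum.distrib)
qed

definition S :: "nat \<Rightarrow> bool list \<Rightarrow> seq \<Rightarrow> real" where
  "S n s = (\<lambda>x. \<Sum>u\<in>{u::bool list. length u = n}. e (u @ s) x)"

lemma S_0: "S 0 s x = e s x"
  by (simp add: S_def)

lemma S_Suc: "S (Suc n) s x = sqrt 2 * S n s (shift x)"
  unfolding S_def sum_len_Suc by (simp add: e_shift sum_divide_distrib[symmetric])

lemma s2: "sqrt 2 * sqrt 2 = (2::real)" by simp

lemma Bdag_S: "Bdag (S n s) = (\<lambda>x. S (Suc n) s x / 2)"
  by (rule ext) (simp add: Bdag_def koopman_def S_Suc field_simps s2)

lemma Bdag_lin: "Bdag (\<lambda>x. a * f x + b * g x) = (\<lambda>x. a * Bdag f x + b * Bdag g x)"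
  by (rule ext) (simp add: Bdag_def koopman_def add_divide_distrib)

lemma Bdag_pow_lin:
  "(Bdag ^^ n) (\<lambda>x. a * f x + b * g x) = (\<lambda>x. a * (Bdag ^^ n) f x + b * (Bdag ^^ n) g x)"
  by (induction n) (simp_all add: Bdag_lin)

lemma Bdag_pow_S: "(Bdag ^^ n) (S 0 s) = (\<lambda>x. S n s x / 2 ^ n)"
proof (induction n)
  case (Suc n)
  have "Bdag (\<lambda>x. S n s x / 2 ^ n) = (\<lambda>x. S (Suc n) s x / 2 ^ Suc n)"
    by (rule ext) (simp add: Bdag_def koopman_def S_Suc field_simps s2)
  then show ?case using Suc by simp
qed (simp add: S_0)

lemma BB_shift:
  assumes "\<And>x. f x = g (shift x)"
  shows "Bdag (Bop f) = (\<lambda>x. f x / 2)"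
proof
  fix x
  have sp: "shift (prepend a y) = y" for a y by (simp add: shift_def prepend_def)
  show "Bdag (Bop f) x = f x / 2"
    by (simp add: Bdag_def Bop_def koopman_def ruelle_def assms sp)
qed

lemma pw: "(2::real) powr (- real n / 2) * 2 powr (- real n / 2) = 1 / 2 ^ n"
proof -
  have "(2::real) powr (- real n / 2) * 2 powr (- real n / 2) = 2 powr (- real n)"
    by (simp add: powr_add[symmetric])
  also have "\<dots> = 1 / 2 ^ n" by (simp add: powr_minus powr_realpow divide_inverse)
  finally show ?thesis .
qed

lemma pw2: "(2::real) powr (- real n / 2) * 2 powr (- (real n + 1) / 2) = 2 powr (-1/2) / 2 ^ n"
proof -
  have ex: "- real n / 2 + - (real n + 1) / 2 = -1/2 + - real n" by (simp add: field_simps)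
  have "(2::real) powr (- real n / 2) * 2 powr (- (real n + 1) / 2) = 2 powr (- real n / 2 + - (real n + 1) / 2)"
    by (rule powr_add[symmetric])
  also have "\<dots> = 2 powr (-1/2 + - real n)" by (simp only: ex)
  also have "\<dots> = 2 powr (-1/2) * 2 powr (- real n)" by (rule powr_add)
  also have "\<dots> = 2 powr (-1/2) / 2 ^ n"
  proof -
    have h: "(2::real) powr (- real n) = 1 / 2 ^ n" by (simp add: powr_minus powr_realpow divide_inverse)
    show ?thesis unfolding h by simp
  qed
  finally show ?thesis .
qed

lemma lincomb: "(a::real) * b = c / d \<Longrightarrow> c * (X / d) + - c * (Y / d) = a * (b * X + - b * Y)"
proof -
  assume h: "a * b = c / d"
  have "a * (b * X + - b * Y) = (a * b) * X - (a * b) * Y" by (simp add: algebra_simps)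
  also have "\<dots> = c * (X / d) + - c * (Y / d)" unfolding h by (simp add: algebra_simps)
  finally show ?thesis by simp
qed

lemma ket_star_S: "n \<ge> 1 \<Longrightarrow> ket_star n = (\<lambda>x. 2 powr (- real n / 2) * S n [] x)"
  by (simp add: ket_star_def S_def)

lemma ket_word_S: "n \<ge> 1 \<Longrightarrow> ket_word n w =
   (\<lambda>x. 2 powr (- (real n + 1) / 2) * S n (False # w) x + (- (2 powr (- (real n + 1) / 2))) * S n (True # w) x)"
  by (simp add: ket_word_def S_def algebra_simps)

lemma pw': "(2::real) powr - (real n / 2) * (2 powr - (real n / 2) * y) = y / 2 ^ n"
  using pw[of n] by (simp add: mult.assoc[symmetric])

theorem proposition3p4:
  fixes w :: "bool list option" and n :: nat
  assumes "n \<ge> 1"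
  shows "(Bdag ^^ n) (ket 0 w) = (\<lambda>x. 2 powr (- real n / 2) * ket n w x)
       \<and> Bdag (Bop (ket n w)) = (\<lambda>x. ket n w x / 2)"
proof -
  obtain m where m: "n = Suc m" using assms by (cases n) auto
  show ?thesis
  proof (cases w)
    case None
    have k0: "ket 0 w = (\<lambda>x. 1 * S 0 [] x + 0 * S 0 [] x)"
      by (rule ext) (simp add: None ket_star_def e0_eps_def e1_eps_def S_0 e_def
          powr_minus powr_half_sqrt[symmetric] algebra_simps powr_add[symmetric])
    have A: "(Bdag ^^ n) (ket 0 w) = (\<lambda>x. 2 powr (- real n / 2) * ket n w x)"
      unfolding k0 Bdag_pow_lin Bdag_pow_S
      by (rule ext) (simp add: None ket_star_S[OF assms] pw')
    have B: "Bdag (Bop (ket n w)) = (\<lambda>x. ket n w x / 2)"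
      by (rule BB_shift[where g = "\<lambda>y. 2 powr (- real n / 2) * (sqrt 2 * S m [] y)"])
        (simp add: None m ket_star_S S_Suc)
    show ?thesis by (rule conjI[OF A B])
  next
    case (Some v)
    have k0: "ket 0 w = (\<lambda>x. 2 powr (-1/2) * S 0 (False # v) x + (- (2 powr (-1/2))) * S 0 (True # v) x)"
      by (rule ext) (simp add: Some ket_word_def S_0 algebra_simps)
    have A: "(Bdag ^^ n) (ket 0 w) = (\<lambda>x. 2 powr (- real n / 2) * ket n w x)"
      unfolding k0 Bdag_pow_lin Bdag_pow_S
      unfolding Some ket.simps ket_word_S[OF assms] by (rule ext) (rule lincomb[OF pw2])
    have kw: "ket n w = (\<lambda>x. 2 powr (- (real n + 1) / 2) * S n (False # v) x + (- (2 powr (- (real n + 1) / 2))) * S n (True # v) x)"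
      unfolding Some ket.simps by (rule ket_word_S[OF assms])
    have B: "Bdag (Bop (ket n w)) = (\<lambda>x. ket n w x / 2)"
    proof (rule BB_shift[where g = "\<lambda>y. 2 powr (- (real n + 1) / 2) * (sqrt 2 * S m (False # v) y)
          + (- (2 powr (- (real n + 1) / 2))) * (sqrt 2 * S m (True # v) y)"])
      fix x
      show "ket n w x = 2 powr (- (real n + 1) / 2) * (sqrt 2 * S m (False # v) (shift x))
          + (- (2 powr (- (real n + 1) / 2))) * (sqrt 2 * S m (True # v) (shift x))"
        unfolding kw unfolding m S_Suc by (rule refl)
    qed
    show ?thesis by (rule conjI[OF A B])
  qed
qed

end
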